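(* Let $(F,\cdot)$ be a scalar group. (1) If $(F,\boxplus,\cdot)$ is a left near-field, then the map $\rho_\boxplus:F\to F$, $\rho_\boxplus(\alpha)=1\boxplus\alpha$, is a left near-field addition map on $(F,\cdot)$. (2) If $\rho$ is a left near-field addition map on $(F,\cdot)$, then $(F,\boxplus_\rho,\cdot)$ is a left near-field, where $\alpha\boxplus_\rho\beta:=\alpha\,\rho(\alpha^{-1}\beta)$ if $\alpha\ne0$ and $0\boxplus_\rho\beta:=\beta$.
   Context: A scalar group is a tuple $(F,\cdot,1,0,-1)$ where $(F,\cdot,1)$ is a monoid, $0\ne1$, $0\alpha=\alpha0=0$, $\{1,-1\}$ is exactly the solution set of $x^2=1$, and $(F\setminus\{0\},\cdot)$ is a group; $-\alpha:=(-1)\alpha$. A left near-field $(F,\boxplus,\cdot)$: $(F,\boxplus)$ a group with identity $0$, $(F\setminus\{0\},\cdot)$ a group, $0\cdot\alpha=0$, $\gamma(\alpha\boxplus\beta)=\gamma\alpha\boxplus\gamma\beta$. A left near-field addition map on $(F,\cdot)$ is a map $\rho:F\to F$ such that (i) $\rho(0)=1$; (ii) $\rho(-1)=0$; (iii) $\rho(\alpha^{-1})=\alpha^{-1}\rho(\alpha)$ for all $\alpha\ne0$; (iv) $\rho(\alpha\rho(\beta))=\alpha\,\rho(\beta\,\rho((\alpha\beta)^{-1}))$ for all $\alpha,\beta\ne0$. *)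

theory Defs
  imports Main
begin

text \<open>A scalar group (F, mul, e, z, m) on the whole type 'a:
  e plays the role of 1, z of 0, m of -1.\<close>
definition scalar_group :: "('a \<Rightarrow> 'a \<Rightarrow> 'a) \<Rightarrow> 'a \<Rightarrow> 'a \<Rightarrow> 'a \<Rightarrow> bool" where
  "scalar_group mul e z m \<longleftrightarrow>
     (\<forall>a b c. mul (mul a b) c = mul a (mul b c)) \<and>
     (\<forall>a. mul e a = a \<and> mul a e = a) \<and>
     z \<noteq> e \<and>
     (\<forall>a. mul z a = z \<and> mul a z = z) \<and>
     {x. mul x x = e} = {e, m} \<and>
     (\<forall>a b. a \<noteq> z \<longrightarrow> b \<noteq> z \<longrightarrow> mul a b \<noteq> z) \<and>
     (\<forall>a. a \<noteq> z \<longrightarrow> (\<exists>b. b \<noteq> z \<and> mul a b = e \<and> mul b a = e))"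

text \<open>Multiplicative inverse (meaningful for nonzero arguments).\<close>
definition sinv :: "('a \<Rightarrow> 'a \<Rightarrow> 'a) \<Rightarrow> 'a \<Rightarrow> 'a \<Rightarrow> 'a" where
  "sinv mul e a = (THE b. mul a b = e \<and> mul b a = e)"

definition left_near_field :: "('a \<Rightarrow> 'a \<Rightarrow> 'a) \<Rightarrow> ('a \<Rightarrow> 'a \<Rightarrow> 'a) \<Rightarrow> 'a \<Rightarrow> bool" where
  "left_near_field add mul z \<longleftrightarrow>
     \<comment> \<open>(F, add) is a group with identity z\<close>
     (\<forall>a b c. add (add a b) c = add a (add b c)) \<and>
     (\<forall>a. add z a = a \<and> add a z = a) \<and>
     (\<forall>a. \<exists>b. add a b = z \<and> add b a = z) \<and>
     \<comment> \<open>(F - {z}, mul) is a group\<close>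
     (\<forall>a b. a \<noteq> z \<longrightarrow> b \<noteq> z \<longrightarrow> mul a b \<noteq> z) \<and>
     (\<forall>a b c. a \<noteq> z \<longrightarrow> b \<noteq> z \<longrightarrow> c \<noteq> z \<longrightarrow> mul (mul a b) c = mul a (mul b c)) \<and>
     (\<exists>e. e \<noteq> z \<and> (\<forall>a. a \<noteq> z \<longrightarrow> mul e a = a \<and> mul a e = a) \<and>
          (\<forall>a. a \<noteq> z \<longrightarrow> (\<exists>b. b \<noteq> z \<and> mul a b = e \<and> mul b a = e))) \<and>
     \<comment> \<open>0 * a = 0\<close>
     (\<forall>a. mul z a = z) \<and>
     \<comment> \<open>left distributivity\<close>
     (\<forall>a b c. mul c (add a b) = add (mul c a) (mul c b))"

definition lnf_addition_map ::
    "('a \<Rightarrow> 'a \<Rightarrow> 'a) \<Rightarrow> 'a \<Rightarrow> 'a \<Rightarrow> 'a \<Rightarrow> ('a \<Rightarrow> 'a) \<Rightarrow> bool" where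
  "lnf_addition_map mul e z m \<rho> \<longleftrightarrow>
     \<rho> z = e \<and>
     \<rho> m = z \<and>
     (\<forall>a. a \<noteq> z \<longrightarrow> \<rho> (sinv mul e a) = mul (sinv mul e a) (\<rho> a)) \<and>
     (\<forall>a b. a \<noteq> z \<longrightarrow> b \<noteq> z \<longrightarrow>
        \<rho> (mul a (\<rho> b)) = mul a (\<rho> (mul b (\<rho> (sinv mul e (mul a b))))))"

definition rho_add :: "('a \<Rightarrow> 'a \<Rightarrow> 'a) \<Rightarrow> 'a \<Rightarrow> 'a \<Rightarrow> ('a \<Rightarrow> 'a) \<Rightarrow> 'a \<Rightarrow> 'a \<Rightarrow> 'a" where
  "rho_add mul e z \<rho> a b = (if a = z then b else mul a (\<rho> (mul (sinv mul e a) b)))"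

end

theory Submission
  imports Defs
begin

locale sg =
  fixes mul :: "'a \<Rightarrow> 'a \<Rightarrow> 'a" and e z m :: 'a
  assumes SG: "scalar_group mul e z m"
begin

abbreviation i where "i a \<equiv> sinv mul e a"

lemmas SGs = SG[unfolded scalar_group_def]
lemma assoc: "mul (mul a b) c = mul a (mul b c)" using conjunct1[OF SGs] by blast
lemma ids: "mul e a = a \<and> mul a e = a" using conjunct1[OF conjunct2[OF SGs]] by blast
lemma lid[simp]: "mul e a = a" using ids by blast
lemma rid[simp]: "mul a e = a" using ids by blast
lemma zne: "z \<noteq> e" using conjunct1[OF conjunct2[OF conjunct2[OF SGs]]] by blast
lemma zs: "mul z a = z \<and> mul a z = z" using conjunct1[OF conjunct2[OF conjunct2[OF conjunct2[OF SGs]]]] by blast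
lemma zl[simp]: "mul z a = z" using zs by blast
lemma zr[simp]: "mul a z = z" using zs by blast
lemma sqset: "{x. mul x x = e} = {e, m}" using conjunct1[OF conjunct2[OF conjunct2[OF conjunct2[OF conjunct2[OF SGs]]]]] by blast
lemma sq: "mul x x = e \<longleftrightarrow> x = e \<or> x = m"
proof -
  have "mul x x = e \<longleftrightarrow> x \<in> {x. mul x x = e}" by simp
  also have "\<dots> \<longleftrightarrow> x \<in> {e, m}" by (simp only: sqset)
  finally show ?thesis by simp
qed
lemmas SG6 = conjunct2[OF conjunct2[OF conjunct2[OF conjunct2[OF conjunct2[OF SGs]]]]]
lemma nzmul: "a \<noteq> z \<Longrightarrow> b \<noteq> z \<Longrightarrow> mul a b \<noteq> z" using conjunct1[OF SG6] by blast
lemma invex: "a \<noteq> z \<Longrightarrow> \<exists>b. b \<noteq> z \<and> mul a b = e \<and> mul b a = e" using conjunct2[OF SG6] by blast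

lemma sinv: assumes "a \<noteq> z" shows "mul a (i a) = e" "mul (i a) a = e"
proof -
  obtain b where b: "mul a b = e" "mul b a = e" using invex[OF assms] by blast
  have u: "c = b" if "mul a c = e \<and> mul c a = e" for c
  proof -
    have "c = mul c (mul a b)" using b by simp
    also have "\<dots> = mul (mul c a) b" by (simp only: assoc)
    also have "\<dots> = b" using that by simp
    finally show ?thesis .
  qed
  have "i a = b" unfolding sinv_def
    by (rule the_equality) (use b u in blast)+
  then show "mul a (i a) = e" "mul (i a) a = e" using b by auto
qed

lemma sinv_nz: assumes "a \<noteq> z" shows "i a \<noteq> z"
proof
  assume "i a = z"
  then have "mul a (i a) = z" by simp
  then show False using sinv(1)[OF assms] zne by simp
qed

lemma canc_l: "a \<noteq> z \<Longrightarrow> mul (i a) (mul a b) = b"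
  using sinv(2)[of a] by (simp add: assoc[symmetric])
lemma canc_l2: "a \<noteq> z \<Longrightarrow> mul a (mul (i a) b) = b"
  using sinv(1)[of a] by (simp add: assoc[symmetric])

lemma sinv_unique: assumes "a \<noteq> z" "mul a c = e" shows "i a = c"
proof -
  have "i a = mul (i a) (mul a c)" using assms by simp
  also have "\<dots> = c" using canc_l[OF assms(1)] by simp
  finally show ?thesis .
qed

lemma sinv_mul: assumes "a \<noteq> z" "b \<noteq> z" shows "i (mul a b) = mul (i b) (i a)"
proof (rule sinv_unique)
  show "mul a b \<noteq> z" using assms nzmul by blast
  have "mul (mul a b) (mul (i b) (i a)) = mul a (mul b (mul (i b) (i a)))" by (simp only: assoc)
  also have "\<dots> = e" using assms by (simp add: canc_l2 sinv)
  finally show "mul (mul a b) (mul (i b) (i a)) = e" .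
qed

lemma sinv_sinv: "a \<noteq> z \<Longrightarrow> i (i a) = a"
  using sinv_unique[of "i a" a] sinv_nz sinv(2) by blast

lemma sinv_e[simp]: "i e = e" using sinv_unique[of e e] zne by simp

lemma m_sq: "mul m m = e" using sq by blast
lemma m_nz: "m \<noteq> z" using m_sq zne by auto

end

locale sgr = sg +
  fixes \<rho> assumes R: "lnf_addition_map mul e z m \<rho>"
begin

abbreviation P where "P \<equiv> rho_add mul e z \<rho>"

lemma r0: "\<rho> z = e" using R unfolding lnf_addition_map_def by blast
lemma rm: "\<rho> m = z" using R unfolding lnf_addition_map_def by blast
lemma r3: "a \<noteq> z \<Longrightarrow> \<rho> (i a) = mul (i a) (\<rho> a)" using R unfolding lnf_addition_map_def by blast
lemma r4: "a \<noteq> z \<Longrightarrow> b \<noteq> z \<Longrightarrow>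
        \<rho> (mul a (\<rho> b)) = mul a (\<rho> (mul b (\<rho> (i (mul a b)))))"
  using R unfolding lnf_addition_map_def by blast

lemma Pz[simp]: "P z b = b" unfolding rho_add_def by simp
lemma Pnz: "a \<noteq> z \<Longrightarrow> P a b = mul a (\<rho> (mul (i a) b))" unfolding rho_add_def by simp
lemma Pr0[simp]: "P a z = a" by (cases "a = z") (auto simp: Pnz r0)
lemma P1: "P e x = \<rho> x" using zne by (simp add: Pnz)

lemma D: "P (mul c a) (mul c b) = mul c (P a b)"
proof (cases "c = z \<or> a = z")
  case True then show ?thesis by auto
next
  case False
  then have "mul c a \<noteq> z" using nzmul by blast
  then have "P (mul c a) (mul c b) = mul (mul c a) (\<rho> (mul (mul (i a) (i c)) (mul c b)))"
    using False by (simp add: Pnz sinv_mul)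
  also have "mul (mul (i a) (i c)) (mul c b) = mul (i a) b" using False
    by (simp add: assoc canc_l)
  finally show ?thesis using False by (simp add: Pnz assoc)
qed

lemma C: "P a b = P b a"
proof (cases "a = z \<or> b = z")
  case True then show ?thesis by auto
next
  case False
  then have a: "a \<noteq> z" and b: "b \<noteq> z" by auto
  define x where "x = mul (i a) b"
  have xnz: "x \<noteq> z" unfolding x_def using a b sinv_nz nzmul by blast
  have ib: "i x = mul (i b) a" unfolding x_def using a b
    by (simp add: sinv_mul sinv_nz sinv_sinv)
  have "P b a = mul b (\<rho> (i x))" using b ib by (simp add: Pnz)
  also have "\<dots> = mul b (mul (mul (i b) a) (\<rho> x))" using r3[OF xnz] ib by simp
  also have "\<dots> = mul a (\<rho> x)" using b by (simp add: assoc canc_l2)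
  also have "\<dots> = P a b" using a by (simp add: Pnz x_def)
  finally show ?thesis by simp
qed

lemma RR: assumes "a \<noteq> z" "g \<noteq> z" shows "P e (P a g) = P a (P g e)"
proof -
  define b where "b = mul (i a) g"
  have bnz: "b \<noteq> z" using assms by (simp add: b_def nzmul sinv_nz)
  have ab: "mul a b = g" using assms by (simp add: b_def canc_l2)
  have 1: "mul a (\<rho> b) = P a g" using assms by (simp add: Pnz b_def)
  have 2: "mul b (\<rho> (i g)) = P b (i a)"
  proof -
    have "P b (mul b (i g)) = mul b (\<rho> (i g))" using bnz by (simp add: Pnz canc_l)
    moreover have "mul b (i g) = i a" using assms
      by (simp add: b_def assoc sinv(1))
    ultimately show ?thesis by simp
  qed
  have "P e (P a g) = mul a (\<rho> (P b (i a)))" using r4[OF assms(1) bnz] 1 2 ab by (simp add: P1)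
  also have "\<dots> = mul a (P e (P b (i a)))" by (simp add: P1)
  also have "\<dots> = P a (mul a (P b (i a)))" by (metis D rid)
  also have "\<dots> = P a (P g e)" using assms by (metis D ab sinv(1))
  finally show ?thesis .
qed

lemma S: "P a (P b c) = P b (P a c)"
proof (cases "a = z \<or> b = z \<or> c = z")
  case True then show ?thesis using C by auto
next
  case False
  define b' where "b' = mul (i a) b"
  define c' where "c' = mul (i a) c"
  have nz: "b' \<noteq> z" "c' \<noteq> z" using False by (auto simp: b'_def c'_def nzmul sinv_nz)
  have bb: "b = mul a b'" "c = mul a c'" using False by (auto simp: b'_def c'_def canc_l2)
  have "P a (P b c) = mul a (P e (P b' c'))" by (metis D bb rid)
  also have "\<dots> = mul a (P b' (P c' e))" using RR nz by simp
  also have "\<dots> = mul a (P b' (P e c'))" using C by simp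
  also have "\<dots> = P b (P a c)" by (metis D bb rid)
  finally show ?thesis .
qed

lemma A: "P (P a b) c = P a (P b c)"
  by (metis C S)

lemma NF: "left_near_field P mul z"
  unfolding left_near_field_def
proof (intro conjI allI impI)
  fix a show "\<exists>b. P a b = z \<and> P b a = z"
  proof (cases "a = z")
    case True then show ?thesis by (intro exI[of _ z]) simp
  next
    case False
    have "P a (mul a m) = z" using False by (simp add: Pnz canc_l rm)
    then show ?thesis using C by metis
  qed
next
  show "\<exists>e'. e' \<noteq> z \<and> (\<forall>a. a \<noteq> z \<longrightarrow> mul e' a = a \<and> mul a e' = a) \<and>
          (\<forall>a. a \<noteq> z \<longrightarrow> (\<exists>b. b \<noteq> z \<and> mul a b = e' \<and> mul b a = e'))"
    using zne invex by (intro exI[of _ e]) auto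
qed (auto simp: A D nzmul assoc)

end

locale sga = sg +
  fixes add assumes N: "left_near_field add mul z"
begin

lemmas Ns = N[unfolded left_near_field_def]
lemma aassoc: "add (add a b) c = add a (add b c)" using conjunct1[OF Ns] by blast
lemma azz: "add z a = a \<and> add a z = a" using conjunct1[OF conjunct2[OF Ns]] by blast
lemma az[simp]: "add z a = a" "add a z = a" using azz by blast+
lemma aneg: "\<exists>b. add a b = z \<and> add b a = z" using conjunct1[OF conjunct2[OF conjunct2[OF Ns]]] by blast
lemma dist: "mul c (add a b) = add (mul c a) (mul c b)"
  using conjunct2[OF conjunct2[OF conjunct2[OF conjunct2[OF conjunct2[OF conjunct2[OF conjunct2[OF Ns]]]]]]] by blast

lemma lcanc: assumes "add a x = add a y" shows "x = y"
proof -
  obtain a' where a': "add a' a = z" using aneg by blast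
  have "x = add (add a' a) x" using a' by simp
  also have "\<dots> = add a' (add a y)" using assms by (simp add: aassoc)
  also have "\<dots> = y" using a' by (simp add: aassoc[symmetric])
  finally show ?thesis .
qed

lemma rinv_linv: assumes "add a b = z" shows "add b a = z"
proof -
  obtain c where c: "add b c = z" using aneg by blast
  have "add b a = add (add b a) (add b c)" using c by simp
  also have "\<dots> = add b (add (add a b) c)" by (simp add: aassoc)
  also have "\<dots> = z" using assms c by simp
  finally show ?thesis .
qed

definition n where "n = (SOME n. add e n = z)"
lemma en: "add e n = z"
proof -
  have "\<exists>n. add e n = z" using aneg by blast
  then show ?thesis unfolding n_def by (rule someI_ex)
qed
lemma ne: "add n e = z" using en rinv_linv by blast
lemma negr: "add a (mul a n) = z"
proof -
  have "add a (mul a n) = mul a (add e n)" by (simp add: dist)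
  then show ?thesis by (simp add: en)
qed
lemma negl: "add (mul a n) a = z" using negr rinv_linv by blast
lemma nn: "mul n n = e"
proof -
  have "add n (mul n n) = add n e" using negr[of n] ne by simp
  then show ?thesis by (rule lcanc)
qed

lemma nn2: "mul n (mul n c) = c" by (simp add: assoc[symmetric] nn)
lemma negr2: "add a (add (mul a n) c) = c" by (simp add: aassoc[symmetric] negr)

lemma comm: "add a b = add b a"
proof (cases "n = e")
  case True
  have aa: "add x x = z" for x using negr[of x] True by simp
  have "add b a = add (add b a) (add (add a b) (add a b))" by (simp add: aa)
  also have "\<dots> = add b (add (add a a) (add b (add a b)))" by (simp add: aassoc)
  also have "\<dots> = add b (add b (add a b))" by (simp add: aa)
  also have "\<dots> = add (add b b) (add a b)" by (simp add: aassoc)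
  also have "\<dots> = add a b" by (simp add: aa)
  finally show ?thesis by simp
next
  case False
  then have nm: "n = m" using nn sq by blast
  have central: "mul x n = mul n x" for x
  proof (cases "x = z")
    case True then show ?thesis by simp
  next
    case xz: False
    define y where "y = mul (mul x n) (i x)"
    have yx: "mul y x = mul x n" unfolding y_def using xz by (simp add: assoc sinv)
    have "mul y y = e" unfolding y_def using xz by (simp add: assoc canc_l nn2 sinv)
    moreover have "y \<noteq> e"
    proof
      assume "y = e"
      then have "mul x n = x" using yx by simp
      then have "mul (i x) (mul x n) = mul (i x) x" by simp
      then have "n = e" using xz by (simp add: canc_l sinv)
      then show False using False by simp
    qed
    ultimately have "y = n" using sq nm by blast
    then show ?thesis using yx by simp
  qed
  have nsum: "mul (add a b) n = add (mul b n) (mul a n)" for a b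
  proof -
    have "add (add a b) (add (mul b n) (mul a n)) = z"
      by (simp add: aassoc negr2 negr)
    then have "add (add a b) (add (mul b n) (mul a n)) = add (add a b) (mul (add a b) n)"
      using negr[of "add a b"] by simp
    then show ?thesis by (rule lcanc[symmetric])
  qed
  have sw: "add (mul a n) (mul b n) = add (mul b n) (mul a n)" for a b
  proof -
    have "add (mul a n) (mul b n) = add (mul n a) (mul n b)" by (simp add: central)
    also have "\<dots> = mul n (add a b)" by (simp add: dist)
    also have "\<dots> = mul (add a b) n" by (simp add: central)
    finally show ?thesis using nsum by simp
  qed
  have "add a b = add (mul (mul a n) n) (mul (mul b n) n)" by (simp add: assoc nn)
  also have "\<dots> = add (mul (mul b n) n) (mul (mul a n) n)" by (rule sw)
  also have "\<dots> = add b a" by (simp add: assoc nn)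
  finally show ?thesis .
qed

lemma mn: "m = n"
proof (cases "n = e")
  case False then show ?thesis using nn sq by blast
next
  case True
  have eq: "mul m (add m e) = add m e"
  proof -
    have "mul m (add m e) = add (mul m m) (mul m e)" by (rule dist)
    also have "\<dots> = add e m" using m_sq by simp
    finally show ?thesis using comm[of e m] by simp
  qed
  show ?thesis
  proof (cases "add m e = z")
    case True
    then have "add e m = add e n" using en comm[of e m] by simp
    then show ?thesis by (rule lcanc)
  next
    case False
    have "m = mul m (mul (add m e) (i (add m e)))" using False by (simp add: sinv)
    also have "\<dots> = mul (mul m (add m e)) (i (add m e))" by (simp add: assoc)
    also have "\<dots> = e" using eq False by (simp add: sinv)
    finally show ?thesis using True by simp
  qed
qed

lemma swap1: "add e (add a x) = add a (add x e)"
proof -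
  have "add a (add x e) = add a (add e x)" using comm[of x e] by simp
  also have "\<dots> = add (add a e) x" by (simp add: aassoc)
  also have "\<dots> = add (add e a) x" using comm[of a e] by simp
  also have "\<dots> = add e (add a x)" by (simp add: aassoc)
  finally show ?thesis by simp
qed

lemma MAP: "lnf_addition_map mul e z m (\<lambda>a. add e a)"
  unfolding lnf_addition_map_def
proof (intro conjI allI impI)
  show "add e m = z" using mn en by simp
next
  fix a assume a: "a \<noteq> z"
  have "mul (i a) (add e a) = add (i a) e" using a by (simp add: dist sinv)
  then show "add e (i a) = mul (i a) (add e a)" using comm[of e "i a"] by simp
next
  fix a b assume a: "a \<noteq> z" and b: "b \<noteq> z"
  have ib: "mul b (i (mul a b)) = i a" using a b by (simp add: sinv_mul canc_l2)
  have "mul a (add e (mul b (add e (i (mul a b))))) = add a (add (mul a b) e)"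
    using a by (simp add: dist ib assoc sinv)
  then show "add e (mul a (add e b)) = mul a (add e (mul b (add e (i (mul a b)))))"
    by (simp add: dist swap1)
qed simp

end

theorem mainTheorem14:
  fixes mul :: "'a \<Rightarrow> 'a \<Rightarrow> 'a" and e z m :: 'a
  assumes "scalar_group mul e z m"
  shows "(\<forall>add. left_near_field add mul z \<longrightarrow> lnf_addition_map mul e z m (\<lambda>a. add e a))
     \<and> (\<forall>\<rho>. lnf_addition_map mul e z m \<rho> \<longrightarrow> left_near_field (rho_add mul e z \<rho>) mul z)"
proof (intro conjI allI impI)
  fix add assume "left_near_field add mul z"
  then interpret sga mul e z m add using assms by unfold_locales
  show "lnf_addition_map mul e z m (\<lambda>a. add e a)" by (rule MAP)
next
  fix \<rho> assume "lnf_addition_map mul e z m \<rho>"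
  then interpret sgr mul e z m \<rho> using assms by unfold_locales
  show "left_near_field (rho_add mul e z \<rho>) mul z" by (rule NF)
qed

end
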